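(* Let $i\ge1$ and consider a solution $x\in\mathbb{N}^n$ with $\|x\|_1\le 2^i$. Then there is a partition of $x$ into two solutions $x_1,x_2\in\mathbb{N}^n$ such that: (1) $\|x_1\|_1,\|x_2\|_1\le 2^{i-1}$ and $x=x_1+x_2$; (2) $|w(x_1)-\tfrac12 w(x)|\le 2\Delta$ and $|w(x_2)-\tfrac12 w(x)|\le 2\Delta$; (3) $|p(x_1)-\tfrac12 p(x)|\le 2\Delta$ and $|p(x_2)-\tfrac12 p(x)|\le 2\Delta$.
   Context: Fix items $(p_1,w_1),\dots,(p_n,w_n)$ with $p_k,w_k\in\mathbb{N}$. For $x\in\mathbb{N}^n$ (a multiset of items), $p(x)=\sum_k p_kx_k$, $w(x)=\sum_k w_kx_k$, $\|x\|_1=\sum_k x_k$. Let $p_{\max}=\max_k p_k$, $w_{\max}=\max_k w_k$ and $\Delta:=p_{\max}+w_{\max}$. *)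

theory Defs
  imports Complex_Main
begin

text \<open>Items are indexed by k < n, with profits p k and weights w k.
  A multiset of items is a vector x :: nat \<Rightarrow> nat, of which only the
  coordinates k < n are relevant.\<close>

definition profit :: "nat \<Rightarrow> (nat \<Rightarrow> nat) \<Rightarrow> (nat \<Rightarrow> nat) \<Rightarrow> nat" where
  "profit n p x = (\<Sum>k<n. p k * x k)"

definition weight :: "nat \<Rightarrow> (nat \<Rightarrow> nat) \<Rightarrow> (nat \<Rightarrow> nat) \<Rightarrow> nat" where
  "weight n w x = (\<Sum>k<n. w k * x k)"

definition norm1 :: "nat \<Rightarrow> (nat \<Rightarrow> nat) \<Rightarrow> nat" where
  "norm1 n x = (\<Sum>k<n. x k)"

definition maxval :: "nat \<Rightarrow> (nat \<Rightarrow> nat) \<Rightarrow> nat" where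
  "maxval n f = Max (insert 0 (f ` {..<n}))"

definition Delta :: "nat \<Rightarrow> (nat \<Rightarrow> nat) \<Rightarrow> (nat \<Rightarrow> nat) \<Rightarrow> nat" where
  "Delta n p w = maxval n p + maxval n w"

end

theory Submission imports Defs "HOL-Library.Multiset" begin

lemma split_lemma:
  fixes w p :: "nat \<Rightarrow> nat" and hi P lo :: nat
  shows "sorted (map w L) \<Longrightarrow> (\<forall>y\<in>set L. w y \<le> hi \<and> p y \<le> P) \<Longrightarrow> lo \<le> hi \<Longrightarrow> (\<forall>y\<in>set L. lo \<le> w y) \<Longrightarrow>
   \<exists>A B. mset A + mset B = mset L \<and> length A = (length L + 1) div 2 \<and> length B = length L div 2 \<and>
     \<bar>int (sum_list (map w A)) - int (sum_list (map w B))\<bar> \<le> 2*int hi - int lo \<and>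
     \<bar>int (sum_list (map p A)) - int (sum_list (map p B))\<bar> \<le> int P"
proof (induction L arbitrary: lo rule: induct_list012)
  case 1
  then show ?case by (intro exI[of _ "[]"]) simp
next
  case (2 x)
  then show ?case by (intro exI[of _ "[x]"] exI[of _ "[]"]) auto
next
  case (3 x y zs)
  have s: "sorted (map w zs)" "\<forall>z\<in>set zs. w y \<le> w z" "w x \<le> w y"
    using "3.prems"(1) by auto
  have b: "\<forall>z\<in>set zs. w z \<le> hi \<and> p z \<le> P" "w y \<le> hi" "p x \<le> P" "p y \<le> P" "lo \<le> w x"
    using "3.prems" by auto
  obtain A B where AB: "mset A + mset B = mset zs" "length A = (length zs + 1) div 2"
     "length B = length zs div 2"
     "\<bar>int (sum_list (map w A)) - int (sum_list (map w B))\<bar> \<le> 2*int hi - int (w y)"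
     "\<bar>int (sum_list (map p A)) - int (sum_list (map p B))\<bar> \<le> int P"
    using "3.IH"(1)[of "w y"] s b by blast
  show ?case
  proof (cases "(int (sum_list (map p A)) - int (sum_list (map p B)) \<ge> 0) = (int (p x) - int (p y) \<ge> 0)")
    case True
    show ?thesis
      apply (rule exI[of _ "y#A"], rule exI[of _ "x#B"])
      using AB b s True by (auto simp: abs_if split: if_splits)
  next
    case False
    show ?thesis
      apply (rule exI[of _ "x#A"], rule exI[of _ "y#B"])
      using AB b s False by (auto simp: abs_if split: if_splits)
  qed
qed

lemma sum_count:
  "set A \<subseteq> {..<(n::nat)} \<Longrightarrow> (\<Sum>k<n. f k * count (mset A) k) = sum_list (map f A)"
proof (induction A)
  case Nil then show ?case by simp
next
  case (Cons a A)
  have "(\<Sum>k<n. f k * count (mset (a#A)) k) = (\<Sum>k<n. f k * count (mset A) k + (if k = a then f k else 0))"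
    by (intro sum.cong) auto
  also have "\<dots> = (\<Sum>k<n. f k * count (mset A) k) + (\<Sum>k<n. (if k = a then f k else 0))"
    by (simp add: sum.distrib)
  also have "(\<Sum>k<n. (if k = a then f k else 0)) = f a"
    using Cons.prems by simp
  finally show ?case using Cons by simp
qed

lemma build:
  fixes x :: "nat \<Rightarrow> nat" and n :: nat
  defines "L \<equiv> concat (map (\<lambda>k. replicate (x k) k) [0..<n])"
  shows "set L \<subseteq> {..<n}" "\<And>k. k < n \<Longrightarrow> count (mset L) k = x k"
    "sum_list (map f L) = (\<Sum>k<n. f k * x k)"
proof -
  show "set L \<subseteq> {..<n}" unfolding L_def by auto
  show "\<And>k. k < n \<Longrightarrow> count (mset L) k = x k" unfolding L_def
  proof (induction n)
    case 0 then show ?case by simp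
  next
    case (Suc n) then show ?case by (auto simp: less_Suc_eq)
  qed
  show "sum_list (map f L) = (\<Sum>k<n. f k * x k)" unfolding L_def
    by (induction n) (auto simp: sum_list_replicate)
qed

lemma sl_ms: "sum_list (map f xs) = sum_mset (image_mset f (mset xs))"
  by (metis mset_map sum_mset_sum_list)

lemma maxval_ge: "k < n \<Longrightarrow> f k \<le> maxval n f"
  unfolding maxval_def by (intro Max_ge) auto

lemma ar: "\<bar>a-b\<bar> \<le> 2*(M::real) \<Longrightarrow> M \<ge> 0 \<Longrightarrow> N \<ge> 0 \<Longrightarrow>
   \<bar>a - (a+b)/2\<bar> \<le> 2*(N+M) \<and> \<bar>b - (a+b)/2\<bar> \<le> 2*(N+M)"
  by (auto simp: abs_le_iff field_simps)

theorem lemma3p3: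
  fixes n i :: nat and p w x :: "nat \<Rightarrow> nat"
  assumes "i \<ge> 1"
    and "norm1 n x \<le> 2 ^ i"
  shows "\<exists>x1 x2 :: nat \<Rightarrow> nat.
           norm1 n x1 \<le> 2 ^ (i - 1) \<and> norm1 n x2 \<le> 2 ^ (i - 1) \<and>
           (\<forall>k<n. x k = x1 k + x2 k) \<and>
           \<bar>real (weight n w x1) - real (weight n w x) / 2\<bar> \<le> 2 * real (Delta n p w) \<and>
           \<bar>real (weight n w x2) - real (weight n w x) / 2\<bar> \<le> 2 * real (Delta n p w) \<and>
           \<bar>real (profit n p x1) - real (profit n p x) / 2\<bar> \<le> 2 * real (Delta n p w) \<and>
           \<bar>real (profit n p x2) - real (profit n p x) / 2\<bar> \<le> 2 * real (Delta n p w)"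
proof -
  define L where "L = concat (map (\<lambda>k. replicate (x k) k) [0..<n])"
  note Lp = build[where x=x and n=n, folded L_def]
  define S where "S = sort_key w L"
  have mS: "mset S = mset L" unfolding S_def by simp
  have sS: "sorted (map w S)" unfolding S_def by simp
  have setS: "set S \<subseteq> {..<n}" using Lp(1) mS by (metis set_mset_mset)
  have bnd: "\<forall>y\<in>set S. w y \<le> maxval n w \<and> p y \<le> maxval n p"
    using setS maxval_ge by blast
  obtain A B where AB: "mset A + mset B = mset S" "length A = (length S + 1) div 2"
     "length B = length S div 2"
     "\<bar>int (sum_list (map w A)) - int (sum_list (map w B))\<bar> \<le> 2*int (maxval n w) - int 0"
     "\<bar>int (sum_list (map p A)) - int (sum_list (map p B))\<bar> \<le> int (maxval n p)"
    using split_lemma[OF sS bnd, of 0] by auto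
  have setA: "set A \<subseteq> {..<n}" using AB(1) setS
    by (metis le_sup_iff set_mset_mset set_mset_union)
  have setB: "set B \<subseteq> {..<n}" using AB(1) setS
    by (metis le_sup_iff set_mset_mset set_mset_union)
  have lenL: "length L = norm1 n x"
    using Lp(3)[of "\<lambda>_. 1"] unfolding norm1_def by (simp add: sum_list_triv)
  have lenS: "length S = length L" using mS by (metis size_mset)
  define x1 where "x1 k = count (mset A) k" for k
  define x2 where "x2 k = count (mset B) k" for k
  have n1: "norm1 n x1 = length A"
    using sum_count[OF setA, of "\<lambda>_. 1"] unfolding norm1_def x1_def by (simp add: sum_list_triv)
  have n2: "norm1 n x2 = length B"
    using sum_count[OF setB, of "\<lambda>_. 1"] unfolding norm1_def x2_def by (simp add: sum_list_triv)
  have w1: "weight n w x1 = sum_list (map w A)" unfolding weight_def x1_def using sum_count[OF setA] by simp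
  have w2: "weight n w x2 = sum_list (map w B)" unfolding weight_def x2_def using sum_count[OF setB] by simp
  have p1: "profit n p x1 = sum_list (map p A)" unfolding profit_def x1_def using sum_count[OF setA] by simp
  have p2: "profit n p x2 = sum_list (map p B)" unfolding profit_def x2_def using sum_count[OF setB] by simp
  have tot: "sum_list (map f L) = sum_list (map f A) + sum_list (map f B)" for f :: "nat \<Rightarrow> nat"
    unfolding sl_ms using AB(1) mS by (metis image_mset_union sum_mset.union)
  have wx: "weight n w x = sum_list (map w A) + sum_list (map w B)"
    using Lp(3)[of w] tot[of w] unfolding weight_def by simp
  have px: "profit n p x = sum_list (map p A) + sum_list (map p B)"
    using Lp(3)[of p] tot[of p] unfolding profit_def by simp
  have cnt: "\<forall>k<n. x k = x1 k + x2 k"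
    using Lp(2) AB(1) mS unfolding x1_def x2_def by (metis count_union)
  have pw: "(2::nat) ^ i = 2 * 2 ^ (i - 1)" using assms(1)
    by (metis Suc_diff_le diff_Suc_1 power_Suc)
  have lA: "length A \<le> 2 ^ (i - 1)" "length B \<le> 2 ^ (i - 1)"
    using AB(2,3) lenS lenL assms(2) pw by linarith+
  have D: "real (Delta n p w) = real (maxval n p) + real (maxval n w)" unfolding Delta_def by simp
  have rw: "\<bar>real (sum_list (map w A)) - real (sum_list (map w B))\<bar> \<le> 2 * real (maxval n w)"
  proof -
    have "real_of_int \<bar>int (sum_list (map w A)) - int (sum_list (map w B))\<bar> \<le> real_of_int (2*int (maxval n w))"
      using AB(4) by (simp only: of_int_le_iff)
    then show ?thesis by simp
  qed
  have rp: "\<bar>real (sum_list (map p A)) - real (sum_list (map p B))\<bar> \<le> real (maxval n p)"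
  proof -
    have "real_of_int \<bar>int (sum_list (map p A)) - int (sum_list (map p B))\<bar> \<le> real_of_int (int (maxval n p))"
      using AB(5) by (simp only: of_int_le_iff)
    then show ?thesis by simp
  qed
  show ?thesis
    apply (rule exI[of _ x1], rule exI[of _ x2])
    using n1 n2 lA cnt w1 w2 p1 p2 wx px D
      ar[OF rw, of "real (maxval n p)"] ar[OF order.trans[OF rp], of "real (maxval n p)" "real (maxval n w)"]
    by (simp add: add.commute)
qed

end
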